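(* Let $f_1,\dots,f_h$ ($h\ge 2$) be germs of biholomorphisms of $\mathbb{C}^n$ fixing the origin, each formally linearizable, with simultaneously diagonalizable linear parts. Then $f_1,\dots,f_h$ are simultaneously formally linearizable if and only if $f_p\circ f_q=f_q\circ f_p$ for all $p,q\in\{1,\dots,h\}$.
   Context: A germ $f$ fixing $0$ is formally linearizable if there is an invertible formal power series map $\varphi$ with $\varphi(0)=0$ such that $\varphi^{-1}\circ f\circ\varphi$ is linear; $f_1,\dots,f_h$ are simultaneously formally linearizable if a single such $\varphi$ makes all $\varphi^{-1}\circ f_k\circ\varphi$ linear. Commutation of germs is understood as equality of germs (equivalently of formal power series) at the origin. *)

theory Defs
  imports "HOL-Analysis.Analysis"
begin

text \<open>Formal power series in the variables z_i (i :: 'n, 'n a finite type, so n = CARD('n))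
  with complex coefficients, represented by their coefficient functions on multi-indices.
  A formal map C^n -> C^n is an 'n-tuple of such series.\<close>

type_synonym 'n mindex = "'n \<Rightarrow> nat"
type_synonym 'n fpser = "'n mindex \<Rightarrow> complex"
type_synonym 'n fmap = "'n \<Rightarrow> 'n fpser"

definition mdeg :: "('n::finite) mindex \<Rightarrow> nat" where
  "mdeg \<alpha> = (\<Sum>i\<in>UNIV. \<alpha> i)"

definition unit_mindex :: "'n \<Rightarrow> 'n mindex" where
  "unit_mindex j = (\<lambda>i. if i = j then 1 else 0)"

text \<open>Coefficient of z^\<beta> in the product over j of G_j^(\<alpha> j)
  (multinomial expansion over the finite index set of factors).\<close>
definition fm_monpow_coeff :: "('n::finite) fmap \<Rightarrow> 'n mindex \<Rightarrow> 'n mindex \<Rightarrow> complex" where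
  "fm_monpow_coeff G \<alpha> \<beta> =
     (let I = {(j, k). k < \<alpha> j} in
      \<Sum>\<gamma> \<in> {\<gamma> \<in> PiE I (\<lambda>_. {m. \<forall>i. m i \<le> \<beta> i}). (\<lambda>i. \<Sum>p\<in>I. \<gamma> p i) = \<beta>}.
         \<Prod>p\<in>I. G (fst p) (\<gamma> p))"

text \<open>Formal composition F \<circ> G, for G without constant term.\<close>
definition fm_comp :: "('n::finite) fmap \<Rightarrow> 'n fmap \<Rightarrow> 'n fmap" where
  "fm_comp F G = (\<lambda>i \<beta>. \<Sum>\<alpha> \<in> {\<alpha>. mdeg \<alpha> \<le> mdeg \<beta>}. F i \<alpha> * fm_monpow_coeff G \<alpha> \<beta>)"

definition fm_id :: "('n::finite) fmap" where
  "fm_id = (\<lambda>i \<beta>. if \<beta> = unit_mindex i then 1 else 0)"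

definition fixes_origin :: "('n::finite) fmap \<Rightarrow> bool" where
  "fixes_origin F \<longleftrightarrow> (\<forall>i. F i (\<lambda>_. 0) = 0)"

text \<open>Convergent (= germ of a holomorphic map): Cauchy-type coefficient bound.\<close>
definition fm_convergent :: "('n::finite) fmap \<Rightarrow> bool" where
  "fm_convergent F \<longleftrightarrow> (\<exists>C r. r > 0 \<and> (\<forall>i \<alpha>. norm (F i \<alpha>) \<le> C * r ^ mdeg \<alpha>))"

definition biholo_germ0 :: "('n::finite) fmap \<Rightarrow> bool" where
  "biholo_germ0 F \<longleftrightarrow> fixes_origin F \<and> fm_convergent F \<and>
     (\<exists>G. fixes_origin G \<and> fm_convergent G \<and> fm_comp F G = fm_id \<and> fm_comp G F = fm_id)"

definition fm_linear :: "('n::finite) fmap \<Rightarrow> bool" where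
  "fm_linear F \<longleftrightarrow> (\<forall>i \<beta>. mdeg \<beta> \<noteq> 1 \<longrightarrow> F i \<beta> = 0)"

definition simul_formally_linearizable :: "(nat \<Rightarrow> ('n::finite) fmap) \<Rightarrow> nat set \<Rightarrow> bool" where
  "simul_formally_linearizable F S \<longleftrightarrow>
     (\<exists>\<phi> \<psi>. fixes_origin \<phi> \<and> fixes_origin \<psi> \<and> fm_comp \<phi> \<psi> = fm_id \<and> fm_comp \<psi> \<phi> = fm_id \<and>
        (\<forall>k\<in>S. fm_linear (fm_comp \<psi> (fm_comp (F k) \<phi>))))"

definition formally_linearizable :: "('n::finite) fmap \<Rightarrow> bool" where
  "formally_linearizable f \<longleftrightarrow> simul_formally_linearizable (\<lambda>_. f) {0}"

definition lin_part :: "('n::finite) fmap \<Rightarrow> complex^'n^'n" where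
  "lin_part F = (\<chi> i j. F i (unit_mindex j))"

definition simul_diagonalizable :: "(nat \<Rightarrow> complex^('n::finite)^'n) \<Rightarrow> nat set \<Rightarrow> bool" where
  "simul_diagonalizable A S \<longleftrightarrow>
     (\<exists>(P::complex^'n^'n) (Q::complex^'n^'n). P ** Q = mat 1 \<and> Q ** P = mat 1 \<and>
        (\<forall>k\<in>S. \<forall>i j. i \<noteq> j \<longrightarrow> (Q ** A k ** P) $ i $ j = 0))"

end

theory Submission
  imports Defs
begin

section \<open>Multi-indices\<close>

definition madd :: "'n mindex \<Rightarrow> 'n mindex \<Rightarrow> 'n mindex" where
  "madd a b = (\<lambda>i. a i + b i)"

definition lebox :: "('n::finite) mindex \<Rightarrow> 'n mindex set" where
  "lebox b = {a. \<forall>i. a i \<le> b i}"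

definition spl :: "('n::finite) mindex \<Rightarrow> ('n mindex \<times> 'n mindex) set" where
  "spl b = {(x,y). madd x y = b}"

definition mbox :: "nat \<Rightarrow> ('n::finite) mindex set" where
  "mbox d = {a. mdeg a \<le> d}"

lemma finite_lebox[simp]: "finite (lebox (b::('n::finite) mindex))"
proof -
  have "lebox b = PiE UNIV (\<lambda>i. {..b i})" by (auto simp: PiE_UNIV_domain lebox_def)
  then show ?thesis by (simp add: finite_PiE)
qed

lemma mdeg_ge_comp: "(a::('n::finite) mindex) i \<le> mdeg a"
  unfolding mdeg_def by (rule member_le_sum) auto

lemma box_sub_lebox: "mbox d \<subseteq> lebox (\<lambda>_. d)"
  unfolding mbox_def lebox_def using mdeg_ge_comp le_trans by blast

lemma finite_box[simp]: "finite (mbox d :: ('n::finite) mindex set)"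
  using finite_subset[OF box_sub_lebox] by auto

lemma mdeg_madd[simp]: "mdeg (madd a b) = mdeg a + mdeg (b::('n::finite) mindex)"
  unfolding mdeg_def madd_def by (simp add: sum.distrib)

lemma mdeg_zero[simp]: "mdeg (\<lambda>_. 0 :: nat) = 0"
  unfolding mdeg_def by simp

lemma mdeg_eq_0_iff: "mdeg (a::('n::finite) mindex) = 0 \<longleftrightarrow> a = (\<lambda>_. 0)"
  unfolding mdeg_def by (auto simp: fun_eq_iff)

lemma madd_0[simp]: "madd (\<lambda>_. 0) a = a" "madd a (\<lambda>_. 0) = a"
  by (auto simp: madd_def)

lemma madd_comm: "madd a b = madd b a" by (auto simp: madd_def)
lemma madd_assoc: "madd (madd a b) c = madd a (madd b c)" by (auto simp: madd_def)

lemma spl_sub: "spl b \<subseteq> lebox b \<times> lebox b"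
  by (auto simp: spl_def lebox_def madd_def)

lemma finite_spl[simp]: "finite (spl (b::('n::finite) mindex))"
  using finite_subset[OF spl_sub] by auto

lemma mem_spl[simp]: "(x,y) \<in> spl b \<longleftrightarrow> madd x y = b"
  by (simp add: spl_def)

lemma madd_eq_0: "madd x y = (\<lambda>_. 0) \<longleftrightarrow> x = (\<lambda>_. 0) \<and> y = (\<lambda>_. 0)"
  by (auto simp: madd_def fun_eq_iff)

lemma sum_Sigma': "finite A \<Longrightarrow> (\<forall>x\<in>A. finite (B x)) \<Longrightarrow>
  (\<Sum>x\<in>A. \<Sum>y\<in>B x. f x y) = (\<Sum>p\<in>Sigma A B. f (fst p) (snd p))"
  using sum.Sigma[of A B f] by (simp add: case_prod_beta')

section \<open>The ring of formal power series\<close>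

datatype 'n ms = MS (cf: "'n mindex \<Rightarrow> complex")

lemma ms_eqI: "(\<And>b. cf s b = cf t b) \<Longrightarrow> s = t"
  by (rule ms.expand) auto

instantiation ms :: (finite) comm_ring_1
begin
definition "0 = MS (\<lambda>_. 0)"
definition "1 = MS (\<lambda>b. if b = (\<lambda>_. 0) then 1 else 0)"
definition "s + t = MS (\<lambda>b. cf s b + cf t b)"
definition "s - t = MS (\<lambda>b. cf s b - cf t b)"
definition "- s = MS (\<lambda>b. - cf s b)"
definition "s * t = MS (\<lambda>b. \<Sum>(x,y)\<in>spl b. cf s x * cf t y)"

lemma cf_simps0:
  "cf 0 b = 0" "cf 1 b = (if b = (\<lambda>_. 0) then 1 else 0)"
  "cf (s + t) b = cf s b + cf t b" "cf (s - t) b = cf s b - cf t b"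
  "cf (- s) b = - cf s b" "cf (s * t) b = (\<Sum>(x,y)\<in>spl b. cf s x * cf t y)"
  by (simp_all add: zero_ms_def one_ms_def plus_ms_def minus_ms_def uminus_ms_def times_ms_def)

definition trip :: "'a mindex \<Rightarrow> ('a mindex \<times> 'a mindex \<times> 'a mindex) set" where
  "trip b = {(x,y,z). madd (madd x y) z = b}"

lemma assoc_left: "cf ((s*t)*u) b = (\<Sum>(x,y,z)\<in>trip b. cf s x * cf t y * cf u z)"
proof -
  have "cf ((s*t)*u) b = (\<Sum>(a,z)\<in>spl b. \<Sum>(x,y)\<in>spl a. cf s x * cf t y * cf u z)"
    by (simp add: cf_simps0 sum_distrib_right case_prod_unfold)
  also have "\<dots> = (\<Sum>((a,z),(x,y))\<in>Sigma (spl b) (\<lambda>(a,z). spl a). cf s x * cf t y * cf u z)"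
    unfolding case_prod_unfold by (rule sum_Sigma') auto
  also have "\<dots> = (\<Sum>(x,y,z)\<in>trip b. cf s x * cf t y * cf u z)"
    by (rule sum.reindex_bij_witness[where i="\<lambda>(x,y,z). ((madd x y, z),(x,y))"
          and j="\<lambda>((a,z),(x,y)). (x,y,z)"]) (auto simp: trip_def)
  finally show ?thesis .
qed

lemma assoc_right: "cf (s*(t*u)) b = (\<Sum>(x,y,z)\<in>trip b. cf s x * cf t y * cf u z)"
proof -
  have "cf (s*(t*u)) b = (\<Sum>(x,a)\<in>spl b. \<Sum>(y,z)\<in>spl a. cf s x * cf t y * cf u z)"
    by (simp add: cf_simps0 sum_distrib_left case_prod_unfold mult.assoc)
  also have "\<dots> = (\<Sum>((x,a),(y,z))\<in>Sigma (spl b) (\<lambda>(x,a). spl a). cf s x * cf t y * cf u z)"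
    unfolding case_prod_unfold by (rule sum_Sigma') auto
  also have "\<dots> = (\<Sum>(x,y,z)\<in>trip b. cf s x * cf t y * cf u z)"
    by (rule sum.reindex_bij_witness[where i="\<lambda>(x,y,z). ((x, madd y z),(y,z))"
          and j="\<lambda>((x,a),(y,z)). (x,y,z)"]) (auto simp: trip_def madd_assoc)
  finally show ?thesis .
qed

instance
proof
  fix s t u :: "'a ms"
  show "s * t * u = s * (t * u)" by (rule ms_eqI) (simp only: assoc_left assoc_right)
  show "s * t = t * s"
  proof (rule ms_eqI)
    fix b
    show "cf (s * t) b = cf (t * s) b" unfolding cf_simps0
      by (rule sum.reindex_bij_witness[where i=prod.swap and j=prod.swap]) (auto simp: madd_comm)
  qed
  show "1 * s = s"
  proof (rule ms_eqI)
    fix b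
    have "cf (1 * s) b = (\<Sum>p\<in>spl b. if p = ((\<lambda>_. 0), b) then cf s b else 0)"
      unfolding cf_simps0 by (rule sum.cong) (auto simp: madd_def split: if_splits)
    also have "\<dots> = cf s b" using sum.delta[OF finite_spl, of "((\<lambda>_. 0), b)" "\<lambda>_. cf s b"] by simp
    finally show "cf (1 * s) b = cf s b" .
  qed
  show "(s + t) * u = s * u + t * u"
    by (rule ms_eqI) (simp add: cf_simps0 sum.distrib distrib_right case_prod_unfold)
  show "(0::'a ms) \<noteq> 1"
  proof
    assume "(0::'a ms) = 1"
    then have "cf 0 (\<lambda>_. 0) = cf (1::'a ms) (\<lambda>_. 0)" by simp
    then show False by (simp add: cf_simps0)
  qed
qed (auto intro!: ms_eqI simp: cf_simps0 algebra_simps)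
end

lemmas cf_simps = cf_simps0

definition mmono :: "('n::finite) mindex \<Rightarrow> 'n ms" where
  "mmono a = MS (\<lambda>b. if b = a then 1 else 0)"

definition mconst :: "complex \<Rightarrow> ('n::finite) ms" where
  "mconst c = MS (\<lambda>b. if b = (\<lambda>_. 0) then c else 0)"

lemma cf_mono[simp]: "cf (mmono a) b = (if b = a then 1 else 0)" by (simp add: mmono_def)
lemma cf_const[simp]: "cf (mconst c) b = (if b = (\<lambda>_. 0) then c else 0)" by (simp add: mconst_def)
lemma cf_MS[simp]: "cf (MS f) = f" by simp

lemma cf_const_mult: "cf (mconst c * s) b = c * cf s b"
proof -
  have "cf (mconst c * s) b = (\<Sum>p\<in>spl b. if p = ((\<lambda>_. 0), b) then c * cf s b else 0)"
    unfolding cf_simps by (rule sum.cong) (auto simp: madd_def split: if_splits)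
  also have "\<dots> = c * cf s b"
    using sum.delta[OF finite_spl, of "((\<lambda>_. 0), b)" "\<lambda>_. c * cf s b"] by simp
  finally show ?thesis .
qed

lemma const_mult: "mconst a * mconst b = (mconst (a*b) :: ('n::finite) ms)"
  by (rule ms_eqI) (simp add: cf_const_mult)

lemma const_1[simp]: "mconst 1 = (1 :: ('n::finite) ms)"
  by (rule ms_eqI) (simp add: cf_simps)

lemma const_power: "mconst a ^ k = (mconst (a ^ k) :: ('n::finite) ms)"
  by (induction k) (auto simp: const_mult)

lemma const_prod: "finite A \<Longrightarrow> (\<Prod>j\<in>A. mconst (f j)) = (mconst (\<Prod>j\<in>A. f j) :: ('n::finite) ms)"
  by (induction A rule: finite_induct) (auto simp: const_mult)

lemma mono_mult: "mmono a * mmono b = mmono (madd a b)"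
proof (rule ms_eqI)
  fix c
  have "cf (mmono a * mmono b) c = (\<Sum>p\<in>spl c. if p = (a,b) then 1 else 0)"
    unfolding cf_simps by (rule sum.cong) (auto split: if_splits)
  also have "\<dots> = cf (mmono (madd a b)) c"
    using sum.delta[OF finite_spl, of "(a,b)" "\<lambda>_. 1::complex"] by auto
  finally show "cf (mmono a * mmono b) c = cf (mmono (madd a b)) c" .
qed

lemma mono_0: "mmono (\<lambda>_. 0) = 1" by (rule ms_eqI) (simp add: cf_simps)

lemma mono_power: "mmono a ^ k = mmono (\<lambda>i. k * a i)"
  by (induction k) (auto simp: mono_0 mono_mult madd_def algebra_simps)

lemma mono_prod: "finite A \<Longrightarrow> (\<Prod>j\<in>A. mmono (f j)) = mmono (\<lambda>i. \<Sum>j\<in>A. f j i)"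
  by (induction A rule: finite_induct) (auto simp: mono_0 mono_mult madd_def)

section \<open>Orders and agreement\<close>

definition ordge :: "('n::finite) ms \<Rightarrow> nat \<Rightarrow> bool" where
  "ordge s k \<longleftrightarrow> (\<forall>b. mdeg b < k \<longrightarrow> cf s b = 0)"

definition agr :: "nat \<Rightarrow> ('n::finite) ms \<Rightarrow> 'n ms \<Rightarrow> bool" where
  "agr D x y \<longleftrightarrow> (\<forall>b. mdeg b < D \<longrightarrow> cf x b = cf y b)"

lemma ordge_0[simp]: "ordge s 0" by (simp add: ordge_def)

lemma ordge_mult: fixes s t :: "('n::finite) ms" assumes "ordge s a" "ordge t c" shows "ordge (s*t) (a+c)"
  unfolding ordge_def cf_simps
proof (intro allI impI sum.neutral ballI)
  fix b and p :: "'n mindex \<times> 'n mindex" assume b: "mdeg b < a + c" and p: "p \<in> spl b"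
  obtain x y where [simp]: "p = (x,y)" by fastforce
  from p have "mdeg x + mdeg y = mdeg b" by (auto simp flip: mdeg_madd)
  then have "mdeg x < a \<or> mdeg y < c" using b by linarith
  then show "(case p of (x, y) \<Rightarrow> cf s x * cf t y) = 0" using assms by (auto simp: ordge_def)
qed

lemma ordge_1[simp]: "ordge (1::('n::finite) ms) 0" by simp

lemma ordge_power: "ordge s a \<Longrightarrow> ordge (s^k) (k*a)"
  by (induction k) (auto dest: ordge_mult)

lemma ordge_prod: "finite A \<Longrightarrow> (\<And>j. j\<in>A \<Longrightarrow> ordge (f j) (k j)) \<Longrightarrow> ordge (\<Prod>j\<in>A. f j) (\<Sum>j\<in>A. k j)"
  by (induction A rule: finite_induct) (auto intro: ordge_mult)

lemma agr_mult:
  fixes x y x' y' :: "('n::finite) ms"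
  assumes "agr D1 x x'" "agr D2 y y'" "ordge x a" "ordge x' a" "ordge y c" "ordge y' c"
  shows "agr (min (D1 + c) (D2 + a)) (x*y) (x'*y')"
  unfolding agr_def cf_simps
proof (intro allI impI sum.cong refl)
  fix b and p :: "'n mindex \<times> 'n mindex" assume b: "mdeg b < min (D1 + c) (D2 + a)" and p: "p \<in> spl b"
  obtain u v where [simp]: "p = (u,v)" by fastforce
  from p have d: "mdeg u + mdeg v = mdeg b" by (auto simp flip: mdeg_madd)
  show "(case p of (x1, y1) \<Rightarrow> cf x x1 * cf y y1) = (case p of (x, y) \<Rightarrow> cf x' x * cf y' y)"
  proof (cases "mdeg u < a \<or> mdeg v < c")
    case True then show ?thesis using assms by (auto simp: ordge_def)
  next
    case False
    then have "mdeg u < D1" "mdeg v < D2" using d b by linarith+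
    then show ?thesis using assms by (auto simp: agr_def)
  qed
qed

lemma agr_refl[simp]: "agr D x x" by (simp add: agr_def)

lemma agr_power:
  assumes "agr (d+1) x x'" "ordge x 1" "ordge x' 1"
  shows "agr (d+k) (x^k) (x'^k) \<and> ordge (x^k) k \<and> ordge (x'^k) k"
proof (induction k)
  case 0 then show ?case by (simp add: agr_def)
next
  case (Suc k)
  then have "agr (min (d+1+k) (d+k+1)) (x * x^k) (x' * x'^k)"
    using agr_mult[OF assms(1) _ assms(2,3)] by blast
  moreover have "ordge (x * x^k) (1+k)" by (rule ordge_mult) (use Suc assms in auto)
  moreover have "ordge (x' * x'^k) (1+k)" by (rule ordge_mult) (use Suc assms in auto)
  ultimately show ?case by (simp add: add.commute add.left_commute)
qed

lemma agr_prod: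
  assumes "finite A" "\<And>j. j\<in>A \<Longrightarrow> agr (d+1) (x j) (x' j) \<and> ordge (x j) 1 \<and> ordge (x' j) 1"
  shows "agr (d + (\<Sum>j\<in>A. k j)) (\<Prod>j\<in>A. x j ^ k j) (\<Prod>j\<in>A. x' j ^ k j)
     \<and> ordge (\<Prod>j\<in>A. x j ^ k j) (\<Sum>j\<in>A. k j) \<and> ordge (\<Prod>j\<in>A. x' j ^ k j) (\<Sum>j\<in>A. k j)"
  using assms
proof (induction A rule: finite_induct)
  case empty then show ?case by (simp add: agr_def)
next
  case (insert a A)
  let ?P = "\<Prod>j\<in>A. x j ^ k j" and ?P' = "\<Prod>j\<in>A. x' j ^ k j" and ?S = "\<Sum>j\<in>A. k j"
  have IH: "agr (d + ?S) ?P ?P'" "ordge ?P ?S" "ordge ?P' ?S" using insert by auto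
  have X: "agr (d + k a) (x a ^ k a) (x' a ^ k a)" "ordge (x a ^ k a) (k a)" "ordge (x' a ^ k a) (k a)"
    using agr_power[of d "x a" "x' a" "k a"] insert.prems by auto
  have "agr (min (d + k a + ?S) (d + ?S + k a)) (x a ^ k a * ?P) (x' a ^ k a * ?P')"
    by (rule agr_mult[OF X(1) IH(1) X(2,3) IH(2,3)])
  moreover have "ordge (x a ^ k a * ?P) (k a + ?S)" by (rule ordge_mult) (use X IH in auto)
  moreover have "ordge (x' a ^ k a * ?P') (k a + ?S)" by (rule ordge_mult) (use X IH in auto)
  ultimately show ?case using insert.hyps by (simp add: add.commute add.left_commute)
qed

definition PS :: "'p set \<Rightarrow> ('n::finite) mindex \<Rightarrow> ('p \<Rightarrow> 'n mindex) set" where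
  "PS I b = {\<gamma> \<in> PiE I (\<lambda>_. {m. \<forall>i. m i \<le> b i}). (\<lambda>i. \<Sum>p\<in>I. \<gamma> p i) = b}"

lemma cf_prod:
  fixes F :: "'p \<Rightarrow> ('n::finite) ms"
  assumes "finite I"
  shows "cf (\<Prod>p\<in>I. F p) b = (\<Sum>\<gamma>\<in>PS I b. \<Prod>p\<in>I. cf (F p) (\<gamma> p))"
  using assms
proof (induction I arbitrary: b rule: finite_induct)
  case empty
  have PS: "PS ({}::'p set) b = (if b = (\<lambda>_. 0) then {\<lambda>_. undefined} else {})"
    by (auto simp: PS_def PiE_empty_domain)
  then show ?case by (cases "b = (\<lambda>_. 0)") (simp_all add: cf_simps)
next
  case (insert a I)
  let ?S = "Sigma (spl b) (\<lambda>q. PS I (snd q))"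
  have fin: "finite (PS I v)" for v
  proof -
    have "PS I v \<subseteq> PiE I (\<lambda>_. lebox v)" by (auto simp: PS_def lebox_def)
    moreover have "finite (PiE I (\<lambda>_. lebox v))" using insert.hyps by (simp add: finite_PiE)
    ultimately show ?thesis by (rule finite_subset)
  qed
  have "cf (\<Prod>p\<in>insert a I. F p) b = cf (F a * (\<Prod>p\<in>I. F p)) b"
    using insert.hyps by simp
  also have "\<dots> = (\<Sum>q\<in>spl b. \<Sum>\<gamma>\<in>PS I (snd q). cf (F a) (fst q) * (\<Prod>p\<in>I. cf (F p) (\<gamma> p)))"
    unfolding cf_simps insert.IH by (simp add: case_prod_unfold sum_distrib_left)
  also have "\<dots> = (\<Sum>x\<in>?S. cf (F a) (fst (fst x)) * (\<Prod>p\<in>I. cf (F p) (snd x p)))"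
    by (rule sum_Sigma') (auto simp: fin)
  also have "\<dots> = (\<Sum>\<gamma>\<in>PS (insert a I) b. \<Prod>p\<in>insert a I. cf (F p) (\<gamma> p))"
  proof (rule sum.reindex_bij_witness[where j="\<lambda>x. (snd x)(a := fst (fst x))"
        and i="\<lambda>\<gamma>. ((\<gamma> a, \<lambda>i. \<Sum>p\<in>I. \<gamma> p i), restrict \<gamma> I)"])
    fix x assume x: "x \<in> ?S"
    obtain u v \<gamma> where xe: "x = ((u,v),\<gamma>)" by (metis prod.collapse)
    have g: "\<gamma> \<in> PiE I (\<lambda>_. {m. \<forall>i. m i \<le> v i})" "(\<lambda>i. \<Sum>p\<in>I. \<gamma> p i) = v" "madd u v = b"
      using x by (auto simp: xe PS_def)
    have ga: "\<gamma> a = undefined" using g(1) insert.hyps(2) by (auto simp: PiE_def extensional_def)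
    have s: "(\<lambda>i. \<Sum>p\<in>I. (\<gamma>(a:=u)) p i) = v"
      using g(2) insert.hyps(2) by (auto intro!: sum.cong)
    have r: "restrict (\<gamma>(a:=u)) I = \<gamma>"
      using g(1) insert.hyps(2) by (auto simp: restrict_def fun_eq_iff PiE_def extensional_def)
    show "((\<lambda>\<gamma>. ((\<gamma> a, \<lambda>i. \<Sum>p\<in>I. \<gamma> p i), restrict \<gamma> I)) ((\<lambda>x. (snd x)(a := fst (fst x))) x)) = x"
      using s r by (simp add: xe)
    have "u i \<le> b i" "v i \<le> b i" for i using g(3) unfolding madd_def fun_eq_iff by (metis le_add1 le_add2)+
    then have inP: "\<gamma>(a:=u) \<in> PiE (insert a I) (\<lambda>_. {m. \<forall>i. m i \<le> b i})"
      using g(1) by (auto intro!: fun_upd_in_PiE simp: PiE_def Pi_def extensional_def; meson le_trans)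
    have "(\<lambda>i. \<Sum>p\<in>insert a I. (\<gamma>(a:=u)) p i) = madd u v"
      using s insert.hyps by (auto simp: madd_def fun_eq_iff)
    then show "(\<lambda>x. (snd x)(a := fst (fst x))) x \<in> PS (insert a I) b"
      using inP g(3) by (simp add: xe PS_def)
    show "(\<Prod>p\<in>insert a I. cf (F p) (((\<lambda>x. (snd x)(a := fst (fst x))) x) p)) =
          cf (F a) (fst (fst x)) * (\<Prod>p\<in>I. cf (F p) (snd x p))"
      using insert.hyps by (auto simp: xe intro!: prod.cong)
  next
    fix \<gamma> assume g: "\<gamma> \<in> PS (insert a I) b"
    then have gP: "\<gamma> \<in> PiE (insert a I) (\<lambda>_. {m. \<forall>i. m i \<le> b i})"
      and gs: "(\<lambda>i. \<Sum>p\<in>insert a I. \<gamma> p i) = b" by (auto simp: PS_def)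
    show "(\<lambda>x. (snd x)(a := fst (fst x))) ((\<gamma> a, \<lambda>i. \<Sum>p\<in>I. \<gamma> p i), restrict \<gamma> I) = \<gamma>"
      using gP by (auto simp: fun_eq_iff restrict_def PiE_def extensional_def)
    have "madd (\<gamma> a) (\<lambda>i. \<Sum>p\<in>I. \<gamma> p i) = b"
      using gs insert.hyps by (auto simp: madd_def fun_eq_iff)
    moreover have "restrict \<gamma> I \<in> PS I (\<lambda>i. \<Sum>p\<in>I. \<gamma> p i)"
      unfolding PS_def using insert.hyps(1)
      by (auto simp: PiE_def extensional_def intro: member_le_sum intro!: sum.cong)
    ultimately show "((\<gamma> a, \<lambda>i. \<Sum>p\<in>I. \<gamma> p i), restrict \<gamma> I) \<in> ?S" by simp
  qed
  finally show ?case .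
qed

definition mp :: "('n::finite) fmap \<Rightarrow> 'n mindex \<Rightarrow> 'n ms" where
  "mp G a = (\<Prod>j\<in>UNIV. MS (G j) ^ a j)"

lemma monpow_mp: "fm_monpow_coeff G a b = cf (mp G a) b"
proof -
  let ?I = "{(j, k). k < a j}"
  have I: "?I = Sigma UNIV (\<lambda>j. {..<a j})" by auto
  have fI: "finite ?I" unfolding I by auto
  have "mp G a = (\<Prod>j\<in>UNIV. \<Prod>k\<in>{..<a j}. MS (G j))" by (simp add: mp_def)
  also have "\<dots> = (\<Prod>p\<in>?I. MS (G (fst p)))" unfolding I
    by (subst prod.Sigma) (auto simp: case_prod_unfold)
  finally have "mp G a = (\<Prod>p\<in>?I. MS (G (fst p)))" .
  then show ?thesis unfolding fm_monpow_coeff_def Let_def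
    by (simp add: cf_prod[OF fI] PS_def)
qed

lemma mp_0[simp]: "mp G (\<lambda>_. 0) = 1" by (simp add: mp_def)

lemma mp_unit: "mp G (unit_mindex j) = MS (G j)"
proof -
  have "mp G (unit_mindex j) = (\<Prod>i\<in>UNIV. if i = j then MS (G i) else 1)"
    unfolding mp_def unit_mindex_def by (rule prod.cong) auto
  then show ?thesis by simp
qed

lemma mp_madd: "mp G (madd a b) = mp G a * mp G b"
  by (simp add: mp_def madd_def power_add prod.distrib)

lemma ordge_MS: "fixes_origin G \<Longrightarrow> ordge (MS (G j)) 1"
  by (auto simp: ordge_def fixes_origin_def mdeg_eq_0_iff)

lemma ordge_mp: "fixes_origin G \<Longrightarrow> ordge (mp G a) (mdeg a)"
  unfolding mp_def mdeg_def
  using ordge_prod[of UNIV "\<lambda>j. MS (G j) ^ a j" "\<lambda>j. a j"] ordge_power[OF ordge_MS, of G]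
  by simp

definition agree :: "nat \<Rightarrow> ('n::finite) fmap \<Rightarrow> 'n fmap \<Rightarrow> bool" where
  "agree d G G' \<longleftrightarrow> (\<forall>j b. mdeg b \<le> d \<longrightarrow> G j b = G' j b)"

lemma agr_mp:
  assumes "fixes_origin G" "fixes_origin G'" "agree d G G'"
  shows "agr (d + mdeg a) (mp G a) (mp G' a)"
proof -
  have "agr (d+1) (MS (G j)) (MS (G' j)) \<and> ordge (MS (G j)) 1 \<and> ordge (MS (G' j)) 1" for j
    using assms ordge_MS[OF assms(1), of j] ordge_MS[OF assms(2), of j] by (auto simp: agr_def agree_def)
  then show ?thesis unfolding mp_def mdeg_def
    using agr_prod[of UNIV d "\<lambda>j. MS (G j)" "\<lambda>j. MS (G' j)" a] by simp
qed

definition subst :: "('n::finite) fmap \<Rightarrow> 'n ms \<Rightarrow> 'n ms" where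
  "subst H s = MS (\<lambda>b. \<Sum>a\<in>mbox (mdeg b). cf s a * cf (mp H a) b)"

lemma fm_comp_subst: "fm_comp F G i = cf (subst G (MS (F i)))"
  by (simp add: fm_comp_def subst_def mbox_def monpow_mp fun_eq_iff)

lemma fm_comp_subst': "fm_comp F G = (\<lambda>i. cf (subst G (MS (F i))))"
  by (simp add: fm_comp_subst fun_eq_iff)

lemma cf_subst: "cf (subst H s) b = (\<Sum>a\<in>mbox (mdeg b). cf s a * cf (mp H a) b)"
  by (simp add: subst_def)

lemma subst_ext:
  assumes "fixes_origin H" "finite A" "mbox (mdeg b) \<subseteq> A"
  shows "cf (subst H s) b = (\<Sum>a\<in>A. cf s a * cf (mp H a) b)"
  unfolding cf_subst
proof (rule sum.mono_neutral_left[OF assms(2,3)], intro ballI)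
  fix a assume "a \<in> A - mbox (mdeg b)"
  then have "mdeg b < mdeg a" by (auto simp: mbox_def)
  then show "cf s a * cf (mp H a) b = 0" using ordge_mp[OF assms(1)] by (simp add: ordge_def)
qed

lemma subst_add: "subst H (s + t) = subst H s + subst H t"
  by (rule ms_eqI) (simp add: cf_subst cf_simps distrib_right sum.distrib)

lemma subst_const_mult: "subst H (mconst c * s) = mconst c * subst H s"
  by (rule ms_eqI) (simp add: cf_subst cf_const_mult sum_distrib_left mult.assoc)

lemma subst_one: "subst H 1 = 1"
proof (rule ms_eqI)
  fix b :: "'a mindex"
  have "cf (subst H 1) b = (\<Sum>a\<in>mbox (mdeg b). if a = (\<lambda>_. 0) then cf (mp H a) b else 0)"
    unfolding cf_subst cf_simps by (rule sum.cong) auto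
  also have "\<dots> = cf (mp H (\<lambda>_. 0)) b" by (subst sum.delta[OF finite_box]) (simp add: mbox_def)
  finally show "cf (subst H 1) b = cf 1 b" by simp
qed

lemma subst_mult:
  fixes H :: "('n::finite) fmap"
  assumes H: "fixes_origin H"
  shows "subst H (s * t) = subst H s * subst H t"
proof (rule ms_eqI)
  fix b :: "'n mindex"
  define B where "B = (mbox (mdeg b) :: 'n mindex set)"
  let ?M = "mp H"
  have fB: "finite B" by (simp add: B_def)
  have "cf (subst H (s * t)) b = (\<Sum>a\<in>B. \<Sum>q\<in>spl a. cf s (fst q) * cf t (snd q) * cf (?M a) b)"
    unfolding cf_subst cf_simps B_def by (simp add: sum_distrib_right case_prod_unfold)
  also have "\<dots> = (\<Sum>x\<in>Sigma B spl. cf s (fst (snd x)) * cf t (snd (snd x)) * cf (?M (fst x)) b)"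
    by (rule sum_Sigma') (auto simp: fB)
  also have "\<dots> = (\<Sum>q\<in>{q\<in>B \<times> B. mdeg (fst q) + mdeg (snd q) \<le> mdeg b}.
                     cf s (fst q) * cf t (snd q) * cf (?M (madd (fst q) (snd q))) b)"
    by (rule sum.reindex_bij_witness[where j="\<lambda>x. snd x" and i="\<lambda>q. (madd (fst q) (snd q), q)"])
       (auto simp: B_def mbox_def)
  also have "\<dots> = (\<Sum>q\<in>B \<times> B. cf s (fst q) * cf t (snd q) * cf (?M (madd (fst q) (snd q))) b)"
  proof (rule sum.mono_neutral_left)
    show "\<forall>q\<in>B \<times> B - {q \<in> B \<times> B. mdeg (fst q) + mdeg (snd q) \<le> mdeg b}.
        cf s (fst q) * cf t (snd q) * cf (?M (madd (fst q) (snd q))) b = 0"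
    proof
      fix q assume "q \<in> B \<times> B - {q \<in> B \<times> B. mdeg (fst q) + mdeg (snd q) \<le> mdeg b}"
      then have "mdeg b < mdeg (madd (fst q) (snd q))" by auto
      then have "cf (?M (madd (fst q) (snd q))) b = 0" using ordge_mp[OF H] unfolding ordge_def by blast
      then show "cf s (fst q) * cf t (snd q) * cf (?M (madd (fst q) (snd q))) b = 0" by simp
    qed
  qed (auto simp: fB)
  also have "\<dots> = (\<Sum>x\<in>B. \<Sum>y\<in>B. cf s x * cf t y * cf (?M x * ?M y) b)"
    by (simp add: sum.cartesian_product mp_madd case_prod_unfold)
  also have "\<dots> = (\<Sum>x\<in>B. \<Sum>y\<in>B. \<Sum>q\<in>spl b. cf s x * cf (?M x) (fst q) * (cf t y * cf (?M y) (snd q)))"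
    unfolding cf_simps by (simp add: sum_distrib_left case_prod_unfold algebra_simps)
  also have "\<dots> = (\<Sum>q\<in>spl b. \<Sum>x\<in>B. \<Sum>y\<in>B. cf s x * cf (?M x) (fst q) * (cf t y * cf (?M y) (snd q)))"
    by (simp only: sum.swap[of _ B "spl b"])
  also have "\<dots> = (\<Sum>q\<in>spl b. cf (subst H s) (fst q) * cf (subst H t) (snd q))"
  proof (rule sum.cong[OF refl])
    fix q assume q: "q \<in> spl b"
    then have "mdeg (fst q) \<le> mdeg b" "mdeg (snd q) \<le> mdeg b"
      by (auto simp: spl_def)
    then have "mbox (mdeg (fst q)) \<subseteq> B" "mbox (mdeg (snd q)) \<subseteq> B" by (auto simp: B_def mbox_def)
    then show "(\<Sum>x\<in>B. \<Sum>y\<in>B. cf s x * cf (?M x) (fst q) * (cf t y * cf (?M y) (snd q))) =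
        cf (subst H s) (fst q) * cf (subst H t) (snd q)"
      by (simp add: subst_ext[OF H fB] sum_product)
  qed
  also have "\<dots> = cf (subst H s * subst H t) b" by (simp add: cf_simps case_prod_unfold)
  finally show "cf (subst H (s * t)) b = cf (subst H s * subst H t) b" .
qed

lemma subst_power: "fixes_origin H \<Longrightarrow> subst H (s ^ k) = subst H s ^ k"
  by (induction k) (auto simp: subst_one subst_mult)

lemma subst_prod: "finite A \<Longrightarrow> fixes_origin H \<Longrightarrow> subst H (\<Prod>j\<in>A. f j) = (\<Prod>j\<in>A. subst H (f j))"
  by (induction A rule: finite_induct) (auto simp: subst_one subst_mult)

lemma subst_sum: "finite A \<Longrightarrow> subst H (\<Sum>j\<in>A. f j) = (\<Sum>j\<in>A. subst H (f j))"
proof (induction A rule: finite_induct)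
  case empty
  show ?case by (rule ms_eqI) (simp add: cf_subst cf_simps)
qed (auto simp: subst_add)

lemma mp_subst:
  "fixes_origin H \<Longrightarrow> subst H (mp G a) = mp (\<lambda>j. cf (subst H (MS (G j)))) a"
  by (simp add: mp_def subst_prod subst_power)

lemma fixes_origin_comp: "fixes_origin G \<Longrightarrow> fixes_origin (fm_comp G H)"
  unfolding fixes_origin_def fm_comp_subst cf_subst
  by (simp add: mbox_def mdeg_eq_0_iff)

lemma subst_subst:
  fixes G H :: "('n::finite) fmap"
  assumes G: "fixes_origin G" and H: "fixes_origin H"
  shows "subst H (subst G s) = subst (fm_comp G H) s"
proof (rule ms_eqI)
  fix b :: "'n mindex"
  define B where "B = (mbox (mdeg b) :: 'n mindex set)"
  have fB: "finite B" by (simp add: B_def)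
  have "cf (subst H (subst G s)) b = (\<Sum>a\<in>B. (\<Sum>x\<in>B. cf s x * cf (mp G x) a) * cf (mp H a) b)"
    unfolding cf_subst[of H "subst G s" b] B_def[symmetric]
  proof (rule sum.cong[OF refl])
    fix a assume "a \<in> B"
    then have "mbox (mdeg a) \<subseteq> B" by (auto simp: B_def mbox_def)
    then show "cf (subst G s) a * cf (mp H a) b = (\<Sum>x\<in>B. cf s x * cf (mp G x) a) * cf (mp H a) b"
      by (simp add: subst_ext[OF G fB])
  qed
  also have "\<dots> = (\<Sum>a\<in>B. \<Sum>x\<in>B. cf s x * cf (mp G x) a * cf (mp H a) b)"
    by (simp add: sum_distrib_right)
  also have "\<dots> = (\<Sum>x\<in>B. \<Sum>a\<in>B. cf s x * cf (mp G x) a * cf (mp H a) b)"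
    by (rule sum.swap)
  also have "\<dots> = (\<Sum>x\<in>B. cf s x * (\<Sum>a\<in>B. cf (mp G x) a * cf (mp H a) b))"
    by (simp add: sum_distrib_left mult.assoc)
  also have "\<dots> = (\<Sum>x\<in>B. cf s x * cf (subst H (mp G x)) b)"
    by (simp add: cf_subst B_def)
  also have "\<dots> = cf (subst (fm_comp G H) s) b"
    by (simp add: mp_subst[OF H] cf_subst B_def fm_comp_subst')
  finally show "cf (subst H (subst G s)) b = cf (subst (fm_comp G H) s) b" .
qed

lemma fm_comp_assoc:
  "fixes_origin G \<Longrightarrow> fixes_origin H \<Longrightarrow> fm_comp (fm_comp F G) H = fm_comp F (fm_comp G H)"
  by (simp add: fm_comp_subst' subst_subst)

lemma MS_fm_id: "MS (fm_id j) = mmono (unit_mindex j)"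
  by (rule ms_eqI) (simp add: fm_id_def)

lemma mp_id: "mp fm_id a = mmono a"
proof -
  have "mp fm_id a = (\<Prod>j\<in>UNIV. mmono (\<lambda>i. a j * unit_mindex j i))"
    by (simp add: mp_def MS_fm_id mono_power)
  also have "\<dots> = mmono (\<lambda>i. \<Sum>j\<in>UNIV. a j * unit_mindex j i)" by (simp add: mono_prod)
  also have "(\<lambda>i. \<Sum>j\<in>UNIV. a j * unit_mindex j i) = a"
    by (simp add: unit_mindex_def fun_eq_iff if_distrib cong: if_cong)
  finally show ?thesis .
qed

lemma subst_id: "subst fm_id s = s"
proof (rule ms_eqI)
  fix b
  have "cf (subst fm_id s) b = (\<Sum>a\<in>mbox (mdeg b). if a = b then cf s b else 0)"
    unfolding cf_subst mp_id by (rule sum.cong) auto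
  also have "\<dots> = cf s b" by (subst sum.delta[OF finite_box]) (simp add: mbox_def)
  finally show "cf (subst fm_id s) b = cf s b" .
qed

lemma fm_comp_id_right[simp]: "fm_comp F fm_id = F"
  by (simp add: fm_comp_subst' subst_id)

lemma subst_mono_unit: "fixes_origin H \<Longrightarrow> subst H (mmono (unit_mindex j)) = MS (H j)"
proof (rule ms_eqI)
  fix b assume H: "fixes_origin H"
  have "cf (subst H (mmono (unit_mindex j))) b
      = (\<Sum>a\<in>insert (unit_mindex j) (mbox (mdeg b)). cf (mmono (unit_mindex j)) a * cf (mp H a) b)"
    by (rule subst_ext[OF H]) auto
  also have "\<dots> = (\<Sum>a\<in>insert (unit_mindex j) (mbox (mdeg b)). if a = unit_mindex j then cf (mp H a) b else 0)"
    by (rule sum.cong) auto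
  also have "\<dots> = cf (mp H (unit_mindex j)) b"
    by (subst sum.delta) auto
  finally show "cf (subst H (mmono (unit_mindex j))) b = cf (MS (H j)) b" by (simp add: mp_unit)
qed

lemma fm_comp_id_left: "fixes_origin F \<Longrightarrow> fm_comp fm_id F = F"
  by (simp add: fm_comp_subst' MS_fm_id subst_mono_unit)

lemma fixes_origin_id[simp]: "fixes_origin fm_id"
  by (simp add: fixes_origin_def fm_id_def unit_mindex_def fun_eq_iff)

lemma unit_mindex_inj[simp]: "unit_mindex i = unit_mindex j \<longleftrightarrow> i = j"
  by (auto simp: unit_mindex_def fun_eq_iff)

lemma unit_ne_0[simp]: "unit_mindex j \<noteq> (\<lambda>_. 0)" "(\<lambda>_. 0) \<noteq> unit_mindex j"
  by (auto simp: unit_mindex_def fun_eq_iff)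

lemma mdeg_unit[simp]: "mdeg (unit_mindex (j::'n::finite)) = 1"
  by (simp add: mdeg_def unit_mindex_def)

lemma mdeg_le1:
  assumes "mdeg (b::('n::finite) mindex) \<le> 1"
  shows "b = (\<lambda>_. 0) \<or> (\<exists>j. b = unit_mindex j)"
proof (cases "b = (\<lambda>_. 0)")
  case False
  then obtain j where j: "b j \<noteq> 0" by auto
  have bj: "b j = 1" using j mdeg_ge_comp[of b j] assms by linarith
  have "b i = 0" if "i \<noteq> j" for i
  proof -
    have "b i + b j = (\<Sum>k\<in>{i,j}. b k)" using that by simp
    also have "\<dots> \<le> mdeg b" unfolding mdeg_def by (rule sum_mono2) auto
    finally show ?thesis using assms bj by linarith
  qed
  then have "b = unit_mindex j" using bj by (auto simp: unit_mindex_def fun_eq_iff)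
  then show ?thesis by blast
qed simp

lemma box1: "mbox 1 \<subseteq> insert (\<lambda>_. 0) (range unit_mindex)"
  using mdeg_le1 by (auto simp: mbox_def)

lemma cf_sum: "finite A \<Longrightarrow> cf (\<Sum>j\<in>A. f j) b = (\<Sum>j\<in>A. cf (f j) b)"
  by (induction A rule: finite_induct) (auto simp: cf_simps)

definition lin_map :: "complex^('n::finite)^'n \<Rightarrow> 'n fmap" where
  "lin_map A = (\<lambda>i b. \<Sum>j\<in>UNIV. if b = unit_mindex j then A$i$j else 0)"

lemma lin_map_unit[simp]: "lin_map A i (unit_mindex j) = A$i$j"
  by (simp add: lin_map_def)

lemma lin_map_nonunit: "(\<forall>j. b \<noteq> unit_mindex j) \<Longrightarrow> lin_map A i b = 0"
  by (simp add: lin_map_def)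

lemma fixes_origin_lin_map[simp]: "fixes_origin (lin_map A)"
  by (simp add: fixes_origin_def lin_map_def)

lemma fm_linear_lin_map[simp]: "fm_linear (lin_map A)"
  by (auto simp: fm_linear_def intro!: lin_map_nonunit)

lemma lin_part_lin_map[simp]: "lin_part (lin_map A) = A"
  by (simp add: lin_part_def)

lemma linear_eq_lin_map: "fm_linear L \<Longrightarrow> L = lin_map (lin_part L)"
proof (intro ext)
  fix i b assume L: "fm_linear L"
  show "L i b = lin_map (lin_part L) i b"
  proof (cases "\<exists>j. b = unit_mindex j")
    case True then show ?thesis by (auto simp: lin_part_def)
  next
    case False
    then have "mdeg b \<noteq> 1" using mdeg_le1[of b] by (auto simp: mdeg_eq_0_iff)
    then show ?thesis using L False by (simp add: fm_linear_def lin_map_nonunit)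
  qed
qed

lemma MS_lin_map: "MS (lin_map A i) = (\<Sum>j\<in>UNIV. mconst (A$i$j) * mmono (unit_mindex j))"
  by (rule ms_eqI) (auto simp: cf_sum cf_const_mult lin_map_def intro!: sum.cong)

lemma comp_lin_left:
  assumes "fixes_origin H"
  shows "fm_comp (lin_map A) H i b = (\<Sum>j\<in>UNIV. A$i$j * H j b)"
  by (simp add: fm_comp_subst MS_lin_map subst_sum subst_const_mult subst_mono_unit[OF assms]
      cf_sum cf_const_mult)

lemma lin_map_comp: "fm_comp (lin_map A) (lin_map B) = lin_map (A ** B)"
proof (intro ext)
  fix i b
  show "fm_comp (lin_map A) (lin_map B) i b = lin_map (A ** B) i b"
    unfolding comp_lin_left[OF fixes_origin_lin_map]
  proof (cases "\<exists>k. b = unit_mindex k")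
    case True
    then obtain k where "b = unit_mindex k" by blast
    then show "(\<Sum>j\<in>UNIV. A $ i $ j * lin_map B j b) = lin_map (A ** B) i b"
      by (simp add: matrix_matrix_mult_def)
  next
    case False
    then show "(\<Sum>j\<in>UNIV. A $ i $ j * lin_map B j b) = lin_map (A ** B) i b"
      by (simp add: lin_map_nonunit)
  qed
qed

lemma lin_map_1: "lin_map (mat 1) = fm_id"
proof (intro ext)
  fix i b
  show "lin_map (mat 1) i b = fm_id i b"
  proof (cases "\<exists>k. b = unit_mindex k")
    case True
    then obtain k where "b = unit_mindex k" by blast
    then show ?thesis by (simp add: mat_def fm_id_def)
  next
    case False
    then show ?thesis by (auto simp add: lin_map_nonunit fm_id_def)
  qed
qed

lemma lin_part_id: "lin_part fm_id = mat 1"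
  by (simp add: lin_part_def fm_id_def mat_def vec_eq_iff)

lemma lin_part_comp:
  assumes F: "fixes_origin F" and G: "fixes_origin G"
  shows "lin_part (fm_comp F G) = lin_part F ** lin_part G"
proof -
  have "fm_comp F G i (unit_mindex k) = (\<Sum>j\<in>UNIV. F i (unit_mindex j) * G j (unit_mindex k))" for i k
  proof -
    have "fm_comp F G i (unit_mindex k) =
        (\<Sum>a\<in>insert (\<lambda>_. 0) (range unit_mindex). cf (MS (F i)) a * cf (mp G a) (unit_mindex k))"
      unfolding fm_comp_subst by (rule subst_ext[OF G]) (use box1 in auto)
    also have "\<dots> = (\<Sum>a\<in>insert (\<lambda>_. 0) (range unit_mindex). F i a * cf (mp G a) (unit_mindex k))"
      by simp
    also have "\<dots> = (\<Sum>a\<in>range unit_mindex. F i a * cf (mp G a) (unit_mindex k))"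
      using F by (subst sum.insert) (auto simp: fixes_origin_def)
    also have "\<dots> = (\<Sum>j\<in>UNIV. F i (unit_mindex j) * G j (unit_mindex k))"
      by (subst sum.reindex) (auto simp: inj_on_def mp_unit)
    finally show ?thesis .
  qed
  then show ?thesis by (simp add: lin_part_def matrix_matrix_mult_def vec_eq_iff)
qed

definition mdiag :: "complex^('n::finite)^'n \<Rightarrow> bool" where
  "mdiag D \<longleftrightarrow> (\<forall>i j. i \<noteq> j \<longrightarrow> D$i$j = 0)"

definition dpow :: "complex^('n::finite)^'n \<Rightarrow> 'n mindex \<Rightarrow> complex" where
  "dpow D b = (\<Prod>i\<in>UNIV. (D$i$i) ^ b i)"

lemma dpow_unit[simp]: "dpow D (unit_mindex j) = D$j$j"
proof -
  have "dpow D (unit_mindex j) = (\<Prod>i\<in>UNIV. if i = j then D$i$i else 1)"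
    unfolding dpow_def unit_mindex_def by (rule prod.cong) auto
  then show ?thesis by simp
qed

lemma dpow_madd: "dpow D (madd a b) = dpow D a * dpow D b"
  by (simp add: dpow_def madd_def power_add prod.distrib)

lemma dpow_0[simp]: "dpow D (\<lambda>_. 0) = 1" by (simp add: dpow_def)

lemma lin_map_diag: "mdiag D \<Longrightarrow> lin_map D j b = (if b = unit_mindex j then D$j$j else 0)"
proof (cases "b = unit_mindex j")
  case False
  assume D: "mdiag D"
  have "lin_map D j b = 0" unfolding lin_map_def
    by (rule sum.neutral) (use D False in \<open>auto simp: mdiag_def\<close>)
  then show ?thesis using False by simp
qed simp

lemma MS_lin_map_diag: "mdiag D \<Longrightarrow> MS (lin_map D j) = mconst (D$j$j) * mmono (unit_mindex j)"
  by (rule ms_eqI) (auto simp: cf_const_mult lin_map_diag)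

lemma mp_diag: "mdiag D \<Longrightarrow> mp (lin_map D) a = mconst (dpow D a) * mmono a"
proof -
  assume D: "mdiag D"
  have "mp (lin_map D) a = (\<Prod>j\<in>UNIV. mconst ((D$j$j) ^ a j) * mmono (\<lambda>i. a j * unit_mindex j i))"
    unfolding mp_def MS_lin_map_diag[OF D] by (simp add: power_mult_distrib const_power mono_power)
  also have "\<dots> = mconst (dpow D a) * mmono (\<lambda>i. \<Sum>j\<in>UNIV. a j * unit_mindex j i)"
    by (simp add: prod.distrib const_prod mono_prod dpow_def)
  also have "(\<lambda>i. \<Sum>j\<in>UNIV. a j * unit_mindex j i) = a"
    by (simp add: unit_mindex_def fun_eq_iff if_distrib cong: if_cong)
  finally show ?thesis .
qed

lemma comp_diag_right: "mdiag D \<Longrightarrow> fm_comp F (lin_map D) i b = dpow D b * F i b"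
proof -
  assume D: "mdiag D"
  have "fm_comp F (lin_map D) i b = (\<Sum>a\<in>mbox (mdeg b). if a = b then dpow D b * F i b else 0)"
    unfolding fm_comp_subst cf_subst mp_diag[OF D] cf_const_mult by (rule sum.cong) auto
  also have "\<dots> = dpow D b * F i b" by (subst sum.delta[OF finite_box]) (simp add: mbox_def)
  finally show ?thesis .
qed

lemma comp_diag_left: "mdiag D \<Longrightarrow> fixes_origin H \<Longrightarrow> fm_comp (lin_map D) H i b = D$i$i * H i b"
proof -
  assume D: "mdiag D" and H: "fixes_origin H"
  have "fm_comp (lin_map D) H i b = (\<Sum>j\<in>UNIV. if j = i then D$i$i * H i b else 0)"
    unfolding comp_lin_left[OF H] by (rule sum.cong) (use D in \<open>auto simp: mdiag_def\<close>)
  then show ?thesis by simp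
qed

definition wt :: "complex^('n::finite)^'n \<Rightarrow> complex \<Rightarrow> 'n ms \<Rightarrow> bool" where
  "wt D c x \<longleftrightarrow> (\<forall>b. dpow D b * cf x b = c * cf x b)"

lemma wt_mult: 
  fixes x y :: "('n::finite) ms"
  assumes "wt D c x" "wt D c' y" shows "wt D (c * c') (x * y)"
  unfolding wt_def cf_simps
proof (intro allI)
  fix b :: "'n mindex"
  have "dpow D b * (\<Sum>(u, v)\<in>spl b. cf x u * cf y v) = (\<Sum>(u, v)\<in>spl b. (dpow D u * cf x u) * (dpow D v * cf y v))"
    unfolding sum_distrib_left case_prod_unfold
    by (rule sum.cong) (auto simp: dpow_madd[symmetric] algebra_simps)
  also have "\<dots> = (\<Sum>(u, v)\<in>spl b. (c * cf x u) * (c' * cf y v))"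
    using assms unfolding wt_def by (intro sum.cong) (auto simp: case_prod_unfold)
  also have "\<dots> = c * c' * (\<Sum>(u, v)\<in>spl b. cf x u * cf y v)"
    by (simp add: sum_distrib_left case_prod_unfold algebra_simps)
  finally show "dpow D b * (\<Sum>(u, v)\<in>spl b. cf x u * cf y v) = c * c' * (\<Sum>(u, v)\<in>spl b. cf x u * cf y v)" .
qed

lemma wt_one: "wt D 1 1"
  by (simp add: wt_def cf_simps)

lemma wt_power: "wt D c x \<Longrightarrow> wt D (c ^ k) (x ^ k)"
  by (induction k) (auto simp: wt_one wt_mult)

lemma wt_prod: "finite A \<Longrightarrow> (\<And>j. j\<in>A \<Longrightarrow> wt D (c j) (x j)) \<Longrightarrow> wt D (\<Prod>j\<in>A. c j) (\<Prod>j\<in>A. x j)"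
  by (induction A rule: finite_induct) (auto simp: wt_one wt_mult)

lemma wt_mp: "(\<And>j. wt D (D$j$j) (MS (G j))) \<Longrightarrow> wt D (dpow D a) (mp G a)"
  unfolding mp_def dpow_def by (rule wt_prod) (auto intro: wt_power)

lemma contraction:
  fixes s :: "('n::finite) ms" and G G' :: "'n fmap"
  assumes s: "\<And>a. mdeg a \<le> 1 \<Longrightarrow> cf s a = 0"
    and G: "fixes_origin G" and G': "fixes_origin G'" and ag: "agree d G G'"
    and b: "mdeg b \<le> d + 1"
  shows "cf (subst G s) b = cf (subst G' s) b"
  unfolding cf_subst
proof (rule sum.cong[OF refl])
  fix a :: "'n mindex" assume "a \<in> mbox (mdeg b)"
  show "cf s a * cf (mp G a) b = cf s a * cf (mp G' a) b"
  proof (cases "mdeg a \<le> 1")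
    case True then show ?thesis using s by simp
  next
    case False
    then have "mdeg b < d + mdeg a" using b by linarith
    then show ?thesis using agr_mp[OF G G' ag, of a] by (simp add: agr_def)
  qed
qed

lemma low_comp:
  assumes "\<And>i a. mdeg a \<le> 1 \<Longrightarrow> N i a = 0" "mdeg b \<le> 1"
  shows "fm_comp N G i b = 0"
  unfolding fm_comp_subst cf_subst
  by (rule sum.neutral) (use assms in \<open>auto simp: mbox_def\<close>)

lemma fm_comp_add_left:
  "fm_comp (\<lambda>i b. A i b + B i b) G i b = fm_comp A G i b + fm_comp B G i b"
  by (simp add: fm_comp_def distrib_right sum.distrib)

primrec itr :: "('n::finite) fmap \<Rightarrow> nat \<Rightarrow> 'n fmap" where
  "itr N 0 = fm_id"
| "itr N (Suc d) = (\<lambda>i b. fm_id i b - fm_comp N (itr N d) i b)"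

lemma tangent_right_inv:
  fixes F :: "('n::finite) fmap"
  assumes F0: "fixes_origin F" and F1: "lin_part F = mat 1"
  shows "\<exists>G. fixes_origin G \<and> lin_part G = mat 1 \<and> fm_comp F G = fm_id"
proof -
  define N where "N = (\<lambda>i b. F i b - fm_id i (b::'n mindex))"
  have Nlow: "N i a = 0" if "mdeg a \<le> 1" for i a
  proof -
    from mdeg_le1[OF that] show ?thesis
    proof
      assume "a = (\<lambda>_. 0)" then show ?thesis using F0 by (simp add: N_def fixes_origin_def fm_id_def)
    next
      assume "\<exists>j. a = unit_mindex j"
      then obtain j where a: "a = unit_mindex j" by blast
      have "F i (unit_mindex j) = (mat 1 :: complex^'n^'n) $ i $ j" using F1 by (simp add: lin_part_def vec_eq_iff)
      then show ?thesis by (auto simp: N_def a fm_id_def mat_def)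
    qed
  qed
  have N0: "fixes_origin N" using Nlow by (simp add: fixes_origin_def)
  have Fsplit: "F = (\<lambda>i b. fm_id i b + N i b)" by (simp add: N_def)
  have fo: "fixes_origin (itr N d)" for d
  proof (cases d)
    case (Suc e)
    then show ?thesis using low_comp[of N "\<lambda>_. 0"] Nlow by (simp add: fixes_origin_def fm_id_def)
  qed simp
  have ag: "agree d (itr N d) (itr N (Suc d))" for d
  proof (induction d)
    case 0
    show ?case using fo[of 0] fo[of 1] by (auto simp: agree_def mdeg_eq_0_iff fixes_origin_def)
  next
    case (Suc d)
    show ?case unfolding agree_def
    proof (intro allI impI)
      fix j and b :: "'n mindex" assume "mdeg b \<le> Suc d"
      then have "fm_comp N (itr N d) j b = fm_comp N (itr N (Suc d)) j b"
        unfolding fm_comp_subst using contraction[OF _ fo fo Suc] Nlow by simp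
      then show "itr N (Suc d) j b = itr N (Suc (Suc d)) j b" by simp
    qed
  qed
  have coh: "itr N (mdeg b + k) j b = itr N (mdeg b) j b" for b :: "'n mindex" and k j
  proof (induction k)
    case (Suc k)
    have "itr N (mdeg b + k) j b = itr N (Suc (mdeg b + k)) j b"
      using ag[of "mdeg b + k"] by (simp add: agree_def)
    then show ?case using Suc by simp
  qed simp
  define G where "G = (\<lambda>j b. itr N (mdeg b) j b)"
  have agG: "agree d G (itr N d)" for d
    unfolding agree_def G_def using coh by (metis le_add_diff_inverse)
  have G0: "fixes_origin G" using fo[of 0] by (simp add: G_def fixes_origin_def)
  have key: "G i b + fm_comp N G i b = fm_id i b" for i b
  proof (cases "mdeg b")
    case 0
    then have "b = (\<lambda>_. 0)" by (simp add: mdeg_eq_0_iff)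
    then show ?thesis using G0 low_comp[of N b G i] Nlow by (simp add: fixes_origin_def fm_id_def)
  next
    case (Suc e)
    have "fm_comp N G i b = fm_comp N (itr N e) i b"
      unfolding fm_comp_subst using contraction[OF _ G0 fo agG] Nlow Suc by simp
    then show ?thesis using Suc by (simp add: G_def)
  qed
  have "fm_comp F G = fm_id"
  proof (intro ext)
    fix i b
    show "fm_comp F G i b = fm_id i b"
      unfolding Fsplit fm_comp_add_left fm_comp_id_left[OF G0] using key by simp
  qed
  moreover have "lin_part G = mat 1"
  proof -
    have "G i (unit_mindex k) = fm_id i (unit_mindex k)" for i k
      using key[of i "unit_mindex k"] low_comp[of N "unit_mindex k" G i] Nlow by simp
    then show ?thesis by (simp add: lin_part_def vec_eq_iff fm_id_def mat_def)
  qed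
  ultimately show ?thesis using G0 by blast
qed

lemma tangent_inv:
  fixes F :: "('n::finite) fmap"
  assumes F0: "fixes_origin F" and F1: "lin_part F = mat 1"
  shows "\<exists>G. fixes_origin G \<and> lin_part G = mat 1 \<and> fm_comp F G = fm_id \<and> fm_comp G F = fm_id"
proof -
  obtain G where G: "fixes_origin G" "lin_part G = mat 1" "fm_comp F G = fm_id"
    using tangent_right_inv[OF F0 F1] by blast
  obtain H where H: "fixes_origin H" "lin_part H = mat 1" "fm_comp G H = fm_id"
    using tangent_right_inv[OF G(1,2)] by blast
  have "F = fm_comp F (fm_comp G H)" by (simp add: H)
  also have "\<dots> = fm_comp (fm_comp F G) H" by (simp only: fm_comp_assoc[OF G(1) H(1)])
  also have "\<dots> = H" by (simp add: G fm_comp_id_left H)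
  finally show ?thesis using G H by auto
qed

lemma comp_cancel:
  "fixes_origin A \<Longrightarrow> fixes_origin X \<Longrightarrow> fm_comp P A = fm_id \<Longrightarrow> fm_comp P (fm_comp A X) = X"
  by (simp add: fm_comp_assoc[symmetric] fm_comp_id_left)

lemma comp_swap:
  "fixes_origin A \<Longrightarrow> fixes_origin B \<Longrightarrow> fixes_origin X \<Longrightarrow> fm_comp P A = fm_comp Q B \<Longrightarrow>
   fm_comp P (fm_comp A X) = fm_comp Q (fm_comp B X)"
  by (metis fm_comp_assoc)

lemma lin_cancel: "B ** A = mat 1 \<Longrightarrow> fixes_origin X \<Longrightarrow> fm_comp (lin_map B) (fm_comp (lin_map A) X) = X"
  by (rule comp_cancel) (auto simp: lin_map_comp lin_map_1)

definition EL :: "('n::finite) fmap \<Rightarrow> complex^'n^'n \<Rightarrow> bool" where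
  "EL g D \<longleftrightarrow> (\<exists>\<psi>. fixes_origin \<psi> \<and> lin_part \<psi> = mat 1 \<and> fm_comp \<psi> g = fm_comp (lin_map D) \<psi>)"

lemma proj_step:
  fixes g c :: "('n::finite) fmap" and D :: "nat \<Rightarrow> complex^'n^'n"
  assumes diagD: "\<forall>k\<in>S. mdiag (D k)" and diagE: "mdiag E"
    and g0: "fixes_origin g"
    and comm: "\<forall>k\<in>S. fm_comp g (lin_map (D k)) = fm_comp (lin_map (D k)) g"
    and c0: "fixes_origin c" and c1: "lin_part c = mat 1"
    and ceq: "fm_comp c g = fm_comp (lin_map E) c"
  shows "\<exists>\<psi>. fixes_origin \<psi> \<and> lin_part \<psi> = mat 1 \<and> fm_comp \<psi> g = fm_comp (lin_map E) \<psi>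
           \<and> (\<forall>k\<in>S. fm_comp \<psi> (lin_map (D k)) = fm_comp (lin_map (D k)) \<psi>)"
proof -
  define B where "B = (\<lambda>i. {b. \<forall>k\<in>S. dpow (D k) b = D k $ i $ i})"
  define \<psi> where "\<psi> = (\<lambda>i b. if b \<in> B i then c i b else 0)"
  have wtg: "dpow (D k) b * cf (mp g a) b = dpow (D k) a * cf (mp g a) b" if k: "k \<in> S" for k a b
  proof -
    have "wt (D k) (D k $ j $ j) (MS (g j))" for j
      unfolding wt_def
    proof
      fix b
      have "fm_comp g (lin_map (D k)) j b = fm_comp (lin_map (D k)) g j b" using comm k by simp
      then show "dpow (D k) b * cf (MS (g j)) b = D k $ j $ j * cf (MS (g j)) b"
        using diagD k g0 by (simp add: comp_diag_right comp_diag_left)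
    qed
    then have "wt (D k) (dpow (D k) a) (mp g a)" by (rule wt_mp)
    then show ?thesis by (simp add: wt_def)
  qed
  have Z: "cf (mp g a) b = 0" if "(a \<in> B i) \<noteq> (b \<in> B i)" for a b i
  proof (rule ccontr)
    assume nz: "cf (mp g a) b \<noteq> 0"
    then have "dpow (D k) b = dpow (D k) a" if "k \<in> S" for k using wtg[OF that, of b a] by simp
    then have "(a \<in> B i) = (b \<in> B i)" by (simp add: B_def)
    then show False using that by simp
  qed
  have p0: "fixes_origin \<psi>" using c0 by (simp add: \<psi>_def fixes_origin_def)
  have eq1: "fm_comp \<psi> g = fm_comp (lin_map E) \<psi>"
  proof (intro ext)
    fix i b
    show "fm_comp \<psi> g i b = fm_comp (lin_map E) \<psi> i b"
    proof (cases "b \<in> B i")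
      case True
      have "fm_comp \<psi> g i b = fm_comp c g i b"
        unfolding fm_comp_subst cf_subst
        by (rule sum.cong) (use Z True in \<open>auto simp: \<psi>_def\<close>)
      also have "\<dots> = E $ i $ i * c i b" using ceq comp_diag_left[OF diagE c0] by simp
      finally show ?thesis using True comp_diag_left[OF diagE p0] by (simp add: \<psi>_def)
    next
      case False
      have "fm_comp \<psi> g i b = 0"
        unfolding fm_comp_subst cf_subst
        by (rule sum.neutral) (use Z False in \<open>auto simp: \<psi>_def\<close>)
      then show ?thesis using False comp_diag_left[OF diagE p0] by (simp add: \<psi>_def)
    qed
  qed
  have eq2: "fm_comp \<psi> (lin_map (D k)) = fm_comp (lin_map (D k)) \<psi>" if k: "k \<in> S" for k
  proof (intro ext)
    fix i b
    show "fm_comp \<psi> (lin_map (D k)) i b = fm_comp (lin_map (D k)) \<psi> i b"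
      using diagD k p0 by (simp add: comp_diag_right comp_diag_left \<psi>_def B_def)
  qed
  have lp: "lin_part \<psi> = mat 1"
  proof -
    have "c i (unit_mindex j) = (if i = j then 1 else 0)" for i j
      using c1 by (simp add: lin_part_def vec_eq_iff mat_def)
    moreover have "unit_mindex i \<in> B i" for i by (simp add: B_def)
    ultimately have "\<psi> i (unit_mindex j) = (if i = j then 1 else 0)" for i j by (simp add: \<psi>_def)
    then show ?thesis by (simp add: lin_part_def vec_eq_iff mat_def)
  qed
  show ?thesis using p0 lp eq1 eq2 by blast
qed

lemma simul_diag:
  fixes g :: "nat \<Rightarrow> ('n::finite) fmap" and D :: "nat \<Rightarrow> complex^'n^'n"
  assumes "finite S"
    and "\<forall>k\<in>S. fixes_origin (g k)" "\<forall>k\<in>S. mdiag (D k)" "\<forall>k\<in>S. EL (g k) (D k)"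
    and "\<forall>p\<in>S. \<forall>q\<in>S. fm_comp (g p) (g q) = fm_comp (g q) (g p)"
  shows "\<exists>ps ph. fixes_origin ps \<and> fixes_origin ph \<and> lin_part ps = mat 1 \<and>
           fm_comp ps ph = fm_id \<and> fm_comp ph ps = fm_id \<and>
           (\<forall>k\<in>S. fm_comp ps (g k) = fm_comp (lin_map (D k)) ps)"
  using assms
proof (induction S rule: finite_induct)
  case empty
  show ?case by (rule exI[of _ fm_id], rule exI[of _ fm_id]) (simp add: lin_part_id)
next
  case (insert a S)
  from insert.IH insert.prems obtain ps ph where
    ps0: "fixes_origin ps" and ph0: "fixes_origin ph" and ps1: "lin_part ps = mat 1"
    and psph: "fm_comp ps ph = fm_id" and phps: "fm_comp ph ps = fm_id"
    and conj: "\<forall>k\<in>S. fm_comp ps (g k) = fm_comp (lin_map (D k)) ps"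
    by auto
  have g0: "fixes_origin (g k)" if "k \<in> insert a S" for k using insert.prems that by auto
  define g' where "g' = fm_comp ps (fm_comp (g a) ph)"
  have g'0: "fixes_origin g'" unfolding g'_def using ps0 by (rule fixes_origin_comp)
  have ph1: "lin_part ph = mat 1"
  proof -
    have "lin_part ps ** lin_part ph = mat 1"
      using lin_part_comp[OF ps0 ph0] psph by (simp add: lin_part_id)
    then show ?thesis using ps1 by (simp add: matrix_mul_lid)
  qed
  have gk: "fm_comp ps (fm_comp (g k) X) = fm_comp (lin_map (D k)) (fm_comp ps X)"
    if "k \<in> S" "fixes_origin X" for k X
  proof -
    have "fm_comp ps (g k) = fm_comp (lin_map (D k)) ps" using conj that by blast
    moreover have "fixes_origin (g k)" using g0 that by blast
    ultimately show ?thesis using comp_swap[of "g k" ps X ps "lin_map (D k)"] ps0 that(2) by blast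
  qed
  have phL: "fm_comp ph (fm_comp (lin_map (D k)) X) = fm_comp (g k) (fm_comp ph X)"
    if "k \<in> S" "fixes_origin X" for k X
  proof -
    have phX: "fixes_origin (fm_comp ph X)" using ph0 by (rule fixes_origin_comp)
    have "fm_comp ph (fm_comp (lin_map (D k)) X) = fm_comp ph (fm_comp (lin_map (D k)) (fm_comp ps (fm_comp ph X)))"
      using comp_cancel[OF ph0 that(2) psph] by simp
    also have "\<dots> = fm_comp ph (fm_comp ps (fm_comp (g k) (fm_comp ph X)))"
      using gk[OF that(1) phX] by simp
    also have "\<dots> = fm_comp (g k) (fm_comp ph X)"
      by (rule comp_cancel[OF ps0 _ phps]) (use g0 that in \<open>auto intro: fixes_origin_comp\<close>)
    finally show ?thesis .
  qed
  have ga0: "fixes_origin (g a)" using g0 by simp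
  have comm': "\<forall>k\<in>S. fm_comp g' (lin_map (D k)) = fm_comp (lin_map (D k)) g'"
  proof
    fix k assume k: "k \<in> S"
    have gk0: "fixes_origin (g k)" using g0 k by simp
    have e1: "fm_comp g' (lin_map (D k)) = fm_comp ps (fm_comp (g a) (fm_comp ph (lin_map (D k))))"
      unfolding g'_def using ga0 ph0 by (simp add: fm_comp_assoc fixes_origin_comp)
    have e2: "fm_comp ph (lin_map (D k)) = fm_comp (g k) ph"
      using phL[OF k fixes_origin_id] by simp
    have e3: "fm_comp (g a) (fm_comp (g k) ph) = fm_comp (g k) (fm_comp (g a) ph)"
    proof (rule comp_swap[OF gk0 ga0 ph0])
      show "fm_comp (g a) (g k) = fm_comp (g k) (g a)" using insert.prems(4) k by blast
    qed
    have e4: "fm_comp ps (fm_comp (g k) (fm_comp (g a) ph)) = fm_comp (lin_map (D k)) g'"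
      unfolding g'_def using gk[OF k fixes_origin_comp[OF ga0]] by simp
    show "fm_comp g' (lin_map (D k)) = fm_comp (lin_map (D k)) g'"
      using e1 e2 e3 e4 by simp
  qed
  obtain pa where pa0: "fixes_origin pa" and pa1: "lin_part pa = mat 1"
    and paeq: "fm_comp pa (g a) = fm_comp (lin_map (D a)) pa"
    using insert.prems(3) by (auto simp: EL_def)
  define c where "c = fm_comp pa ph"
  have c0: "fixes_origin c" unfolding c_def using pa0 by (rule fixes_origin_comp)
  have c1: "lin_part c = mat 1" unfolding c_def using lin_part_comp[OF pa0 ph0] pa1 ph1
    by (simp add: matrix_mul_lid)
  have ceq: "fm_comp c g' = fm_comp (lin_map (D a)) c"
  proof -
    have "fm_comp c g' = fm_comp pa (fm_comp ph (fm_comp ps (fm_comp (g a) ph)))"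
      unfolding c_def g'_def using ph0 ps0 g0 by (simp add: fm_comp_assoc fixes_origin_comp)
    also have "\<dots> = fm_comp pa (fm_comp (g a) ph)"
      using comp_cancel[OF ps0 fixes_origin_comp[OF ga0] phps, of ph] by simp
    also have "\<dots> = fm_comp (lin_map (D a)) c"
      unfolding c_def using comp_swap[OF g0 pa0 ph0 paeq] by simp
    finally show ?thesis .
  qed
  obtain ps' where ps'0: "fixes_origin ps'" and ps'1: "lin_part ps' = mat 1"
    and ps'eq: "fm_comp ps' g' = fm_comp (lin_map (D a)) ps'"
    and ps'D: "\<forall>k\<in>S. fm_comp ps' (lin_map (D k)) = fm_comp (lin_map (D k)) ps'"
  proof -
    have dS: "\<forall>k\<in>S. mdiag (D k)" and da: "mdiag (D a)" using insert.prems(2) by auto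
    show ?thesis using proj_step[OF dS da g'0 comm' c0 c1 ceq] that by blast
  qed
  obtain ph' where ph'0: "fixes_origin ph'" and ps'ph': "fm_comp ps' ph' = fm_id"
    and ph'ps': "fm_comp ph' ps' = fm_id"
    using tangent_inv[OF ps'0 ps'1] by blast
  define PS where "PS = fm_comp ps' ps"
  define PH where "PH = fm_comp ph ph'"
  have PS0: "fixes_origin PS" unfolding PS_def using ps'0 by (rule fixes_origin_comp)
  have PH0: "fixes_origin PH" unfolding PH_def using ph0 by (rule fixes_origin_comp)
  have PS1: "lin_part PS = mat 1" unfolding PS_def using lin_part_comp[OF ps'0 ps0] ps1 ps'1
    by (simp add: matrix_mul_lid)
  have "fm_comp PS PH = fm_id"
    unfolding PS_def PH_def using ps0 ph0 ph'0 comp_cancel[OF ph0 ph'0 psph]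
    by (simp add: fm_comp_assoc fixes_origin_comp ps'ph')
  moreover have "fm_comp PH PS = fm_id"
    unfolding PS_def PH_def using ps0 ph0 ph'0 ps'0 comp_cancel[OF ps'0 ps0 ph'ps']
    by (simp add: fm_comp_assoc fixes_origin_comp phps)
  moreover have "fm_comp PS (g k) = fm_comp (lin_map (D k)) PS" if k: "k \<in> insert a S" for k
  proof -
    have "fm_comp ps (g k) = fm_comp ps (fm_comp (g k) (fm_comp ph ps))" by (simp add: phps)
    also have "\<dots> = fm_comp (fm_comp ps (fm_comp (g k) ph)) ps"
      using ph0 ps0 g0[OF k] by (simp add: fm_comp_assoc fixes_origin_comp)
    finally have e1: "fm_comp ps (g k) = fm_comp (fm_comp ps (fm_comp (g k) ph)) ps" .
    have "fm_comp PS (g k) = fm_comp ps' (fm_comp ps (g k))"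
      unfolding PS_def using ps0 g0[OF k] by (simp add: fm_comp_assoc)
    also have "\<dots> = fm_comp ps' (fm_comp (fm_comp ps (fm_comp (g k) ph)) ps)" using e1 by simp
    also have "\<dots> = fm_comp (lin_map (D k)) PS"
    proof (cases "k = a")
      case True
      then show ?thesis
        unfolding PS_def using comp_swap[OF g'0 ps'0 ps0 ps'eq] by (simp add: g'_def)
    next
      case False
      then have kS: "k \<in> S" using k by simp
      have "fm_comp ps (fm_comp (g k) ph) = lin_map (D k)"
        using gk[OF kS ph0] psph by (simp)
      then show ?thesis unfolding PS_def using ps'D kS comp_swap[OF fixes_origin_lin_map ps'0 ps0] by auto
    qed
    finally show ?thesis .
  qed
  ultimately show ?case using PS0 PH0 PS1 by blast
qed

declare fixes_origin_comp[simp]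

lemma EL_from_lin:
  fixes f :: "('n::finite) fmap" and P Q :: "complex^'n^'n"
  assumes f0: "fixes_origin f" and PQ: "P ** Q = mat 1" and QP: "Q ** P = mat 1"
    and fl: "formally_linearizable f"
  shows "EL (fm_comp (lin_map Q) (fm_comp f (lin_map P))) (Q ** lin_part f ** P)"
proof -
  obtain p0 q0 where p00: "fixes_origin p0" and q00: "fixes_origin q0"
    and pq: "fm_comp p0 q0 = fm_id" and qp: "fm_comp q0 p0 = fm_id"
    and lin: "fm_linear (fm_comp q0 (fm_comp f p0))"
    using fl unfolding formally_linearizable_def simul_formally_linearizable_def by auto
  define L where "L = fm_comp q0 (fm_comp f p0)"
  define M where "M = lin_part L"
  have LM: "L = lin_map M" unfolding M_def using lin L_def linear_eq_lin_map by blast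
  define g where "g = fm_comp (lin_map Q) (fm_comp f (lin_map P))"
  define D where "D = Q ** lin_part f ** P"
  define c where "c = fm_comp q0 (lin_map P)"
  define x where "x = fm_comp (lin_map Q) p0"
  have c0: "fixes_origin c" unfolding c_def using q00 by (rule fixes_origin_comp)
  have x0: "fixes_origin x" unfolding x_def by (rule fixes_origin_comp) simp
  have cx: "fm_comp c x = fm_id"
    unfolding c_def x_def using lin_cancel[OF PQ p00] q00 by (simp add: fm_comp_assoc qp)
  have xc: "fm_comp x c = fm_id"
    unfolding c_def x_def using p00 q00 comp_cancel[OF q00 fixes_origin_lin_map pq]
    by (simp add: fm_comp_assoc lin_map_comp QP lin_map_1)
  define Mc where "Mc = lin_part c"
  define R where "R = lin_part x"
  have McR: "Mc ** R = mat 1" unfolding Mc_def R_def using lin_part_comp[OF c0 x0] cx by (simp add: lin_part_id)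
  have RMc: "R ** Mc = mat 1" unfolding Mc_def R_def using lin_part_comp[OF x0 c0] xc by (simp add: lin_part_id)
  have q0f: "fm_comp q0 f = fm_comp L q0"
  proof -
    have "fm_comp q0 f = fm_comp q0 (fm_comp f (fm_comp p0 q0))" by (simp add: pq)
    also have "\<dots> = fm_comp L q0" unfolding L_def using f0 p00 q00
      by (simp add: fm_comp_assoc fixes_origin_comp)
    finally show ?thesis .
  qed
  have g0: "fixes_origin g" unfolding g_def by (rule fixes_origin_comp) simp
  have cg: "fm_comp c g = fm_comp L c"
  proof -
    have "fm_comp c g = fm_comp q0 (fm_comp f (lin_map P))"
      unfolding c_def g_def using lin_cancel[OF PQ fixes_origin_comp[OF f0, of "lin_map P"]] f0
      by (simp add: fm_comp_assoc fixes_origin_comp)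
    also have "\<dots> = fm_comp (fm_comp q0 f) (lin_map P)" using f0 by (simp add: fm_comp_assoc)
    also have "\<dots> = fm_comp L c" unfolding q0f c_def using q00 by (simp add: fm_comp_assoc)
    finally show ?thesis .
  qed
  have lg: "lin_part g = D" unfolding g_def D_def using f0
    by (simp add: lin_part_comp fixes_origin_comp matrix_mul_assoc)
  have McD: "Mc ** D = M ** Mc"
  proof -
    have "lin_part (fm_comp c g) = lin_part (fm_comp L c)" using cg by simp
    moreover have "fixes_origin L" unfolding LM by simp
    ultimately show ?thesis unfolding Mc_def M_def using lin_part_comp c0 g0 lg by metis
  qed
  have RM: "R ** M = D ** R"
  proof -
    have "R ** M = R ** M ** (Mc ** R)" by (simp add: McR matrix_mul_rid)
    also have "\<dots> = R ** (M ** Mc) ** R" by (simp add: matrix_mul_assoc)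
    also have "\<dots> = R ** (Mc ** D) ** R" by (simp add: McD)
    also have "\<dots> = (R ** Mc) ** D ** R" by (simp add: matrix_mul_assoc)
    also have "\<dots> = D ** R" by (simp add: RMc matrix_mul_lid)
    finally show ?thesis .
  qed
  define ps where "ps = fm_comp (lin_map R) c"
  have ps0: "fixes_origin ps" unfolding ps_def by (rule fixes_origin_comp) simp
  have ps1: "lin_part ps = mat 1" unfolding ps_def using c0 RMc
    by (simp add: lin_part_comp Mc_def)
  have "fm_comp ps g = fm_comp (lin_map R) (fm_comp c g)" unfolding ps_def using c0 g0
    by (simp add: fm_comp_assoc)
  also have "\<dots> = fm_comp (lin_map (R ** M)) c" unfolding cg LM using c0
    by (simp add: fm_comp_assoc[symmetric] lin_map_comp)
  also have "\<dots> = fm_comp (lin_map D) ps" unfolding RM ps_def using c0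
    by (simp add: fm_comp_assoc[symmetric] lin_map_comp)
  finally show ?thesis unfolding EL_def using ps0 ps1 by (auto simp: g_def D_def)
qed

lemma diag_mult_entry: "mdiag A \<Longrightarrow> mdiag B \<Longrightarrow> (A ** B) $ i $ k = (if i = k then A$i$i * B$i$i else 0)"
proof -
  assume A: "mdiag A" and B: "mdiag B"
  have "(A ** B) $ i $ k = (\<Sum>j\<in>UNIV. if j = i then A$i$i * B$i$k else 0)"
    unfolding matrix_matrix_mult_def vec_lambda_beta by (rule sum.cong) (use A in \<open>auto simp: mdiag_def\<close>)
  then show ?thesis using B by (simp add: mdiag_def)
qed

lemma diag_comm: "mdiag A \<Longrightarrow> mdiag B \<Longrightarrow> A ** B = B ** A"
  by (simp add: vec_eq_iff diag_mult_entry mult.commute)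

theorem theorem2p4:
  fixes f :: "nat \<Rightarrow> ('n::finite) fmap" and h :: nat
  assumes "h \<ge> 2"
    and "\<forall>k\<in>{1..h}. biholo_germ0 (f k)"
    and "\<forall>k\<in>{1..h}. formally_linearizable (f k)"
    and "simul_diagonalizable (\<lambda>k. lin_part (f k)) {1..h}"
  shows "simul_formally_linearizable f {1..h} \<longleftrightarrow>
         (\<forall>p\<in>{1..h}. \<forall>q\<in>{1..h}. fm_comp (f p) (f q) = fm_comp (f q) (f p))"
proof -
  define S where "S = {1..h}"
  have f0: "fixes_origin (f k)" if "k \<in> S" for k
    using assms(2) that by (auto simp: S_def biholo_germ0_def)
  obtain P Q :: "complex^'n^'n" where PQ: "P ** Q = mat 1" and QP: "Q ** P = mat 1"
    and dg0: "\<forall>k\<in>{1..h}. \<forall>i j. i \<noteq> j \<longrightarrow> (Q ** lin_part (f k) ** P) $ i $ j = 0"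
    using assms(4) unfolding simul_diagonalizable_def by (elim exE conjE) simp
  have dg: "\<forall>k\<in>S. \<forall>i j. i \<noteq> j \<longrightarrow> (Q ** lin_part (f k) ** P) $ i $ j = 0"
    using dg0 by (simp add: S_def)
  define D where "D = (\<lambda>k. Q ** lin_part (f k) ** P)"
  have dD: "mdiag (D k)" if "k \<in> S" for k using dg that by (simp add: mdiag_def D_def)
  have AD: "lin_part (f k) = P ** D k ** Q" for k
  proof -
    have "P ** D k ** Q = (P ** Q) ** lin_part (f k) ** (P ** Q)" by (simp add: D_def matrix_mul_assoc)
    then show ?thesis by (simp add: PQ matrix_mul_lid matrix_mul_rid)
  qed
  show ?thesis unfolding S_def[symmetric]
  proof
    assume "simul_formally_linearizable f S"
    then obtain ph ps where ph0: "fixes_origin ph" and ps0: "fixes_origin ps"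
      and phps: "fm_comp ph ps = fm_id" and psph: "fm_comp ps ph = fm_id"
      and lin: "\<forall>k\<in>S. fm_linear (fm_comp ps (fm_comp (f k) ph))"
      unfolding simul_formally_linearizable_def by blast
    define L where "L = (\<lambda>k. fm_comp ps (fm_comp (f k) ph))"
    define Ps where "Ps = lin_part ps"
    define Ph where "Ph = lin_part ph"
    have PsPh: "Ps ** Ph = mat 1" unfolding Ps_def Ph_def
      using lin_part_comp[OF ps0 ph0] psph by (simp add: lin_part_id)
    have Lk: "L k = lin_map (Ps ** lin_part (f k) ** Ph)" if k: "k \<in> S" for k
    proof -
      have "L k = lin_map (lin_part (L k))" using lin k linear_eq_lin_map unfolding L_def by blast
      also have "lin_part (L k) = Ps ** lin_part (f k) ** Ph"
        unfolding L_def Ps_def Ph_def using f0[OF k] ph0 ps0 by (simp add: lin_part_comp matrix_mul_assoc)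
      finally show ?thesis .
    qed
    have fk: "f k = fm_comp ph (fm_comp (L k) ps)" if k: "k \<in> S" for k
    proof -
      have "fm_comp ph (fm_comp (L k) ps) = fm_comp ph (fm_comp ps (fm_comp (f k) (fm_comp ph ps)))"
        unfolding L_def using f0[OF k] ph0 ps0 by (simp add: fm_comp_assoc)
      also have "\<dots> = f k" using comp_cancel[OF ps0 f0[OF k] phps] by (simp add: phps)
      finally show ?thesis by simp
    qed
    have Lcomm: "fm_comp (L p) (L q) = fm_comp (L q) (L p)" if p: "p \<in> S" and q: "q \<in> S" for p q
    proof -
      have M: "(Ps ** lin_part (f p) ** Ph) ** (Ps ** lin_part (f q) ** Ph)
          = Ps ** P ** (D p ** D q) ** Q ** Ph" for p q
      proof -
        have "(Ps ** lin_part (f p) ** Ph) ** (Ps ** lin_part (f q) ** Ph)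
            = Ps ** lin_part (f p) ** (Ph ** Ps) ** lin_part (f q) ** Ph"
          by (simp add: matrix_mul_assoc)
        also have "Ph ** Ps = mat 1" using PsPh matrix_left_right_inverse by blast
        finally have "(Ps ** lin_part (f p) ** Ph) ** (Ps ** lin_part (f q) ** Ph)
            = Ps ** (P ** D p ** Q) ** (P ** D q ** Q) ** Ph" by (simp add: matrix_mul_rid AD)
        also have "\<dots> = Ps ** P ** D p ** (Q ** P) ** D q ** Q ** Ph" by (simp add: matrix_mul_assoc)
        finally show ?thesis by (simp add: QP matrix_mul_rid matrix_mul_assoc)
      qed
      show ?thesis using Lk[OF p] Lk[OF q] by (simp add: lin_map_comp M diag_comm[OF dD[OF p] dD[OF q]])
    qed
    show "\<forall>p\<in>S. \<forall>q\<in>S. fm_comp (f p) (f q) = fm_comp (f q) (f p)"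
    proof (intro ballI)
      fix p q assume p: "p \<in> S" and q: "q \<in> S"
      have L0: "fixes_origin (L k)" if "k \<in> S" for k using Lk[OF that] by simp
      have e: "fm_comp (f p) (f q) = fm_comp ph (fm_comp (fm_comp (L p) (L q)) ps)"
        if p: "p \<in> S" and q: "q \<in> S" for p q
      proof -
        have Lp: "fixes_origin (L p)" and Lq: "fixes_origin (L q)" using L0 p q by auto
        have "fm_comp (f p) (f q) = fm_comp (fm_comp ph (fm_comp (L p) ps)) (fm_comp ph (fm_comp (L q) ps))"
          using fk[OF p] fk[OF q] by simp
        also have "\<dots> = fm_comp ph (fm_comp (L p) (fm_comp ps (fm_comp ph (fm_comp (L q) ps))))"
          using Lp Lq ph0 ps0 by (simp add: fm_comp_assoc)
        also have "\<dots> = fm_comp ph (fm_comp (L p) (fm_comp (L q) ps))"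
          using comp_cancel[OF ph0 _ psph, of "fm_comp (L q) ps"] Lq by simp
        also have "\<dots> = fm_comp ph (fm_comp (fm_comp (L p) (L q)) ps)"
          using Lq ps0 by (simp add: fm_comp_assoc)
        finally show ?thesis .
      qed
      show "fm_comp (f p) (f q) = fm_comp (f q) (f p)"
        using e[OF p q] e[OF q p] Lcomm[OF p q] by simp
    qed
  next
    assume comm: "\<forall>p\<in>S. \<forall>q\<in>S. fm_comp (f p) (f q) = fm_comp (f q) (f p)"
    define g where "g = (\<lambda>k. fm_comp (lin_map Q) (fm_comp (f k) (lin_map P)))"
    have g0: "\<forall>k\<in>S. fixes_origin (g k)" by (simp add: g_def)
    have gEL: "\<forall>k\<in>S. EL (g k) (D k)"
      unfolding g_def D_def using EL_from_lin[OF f0 PQ QP] assms(3) by (simp add: S_def)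
    have gfq: "fm_comp (g p) (g q) = fm_comp (lin_map Q) (fm_comp (f p) (fm_comp (f q) (lin_map P)))"
      if "p \<in> S" "q \<in> S" for p q
      unfolding g_def using f0 that lin_cancel[OF PQ, of "fm_comp (f q) (lin_map P)"]
      by (simp add: fm_comp_assoc)
    have gcomm: "\<forall>p\<in>S. \<forall>q\<in>S. fm_comp (g p) (g q) = fm_comp (g q) (g p)"
    proof (intro ballI)
      fix p q assume p: "p \<in> S" and q: "q \<in> S"
      have "fm_comp (f p) (fm_comp (f q) (lin_map P)) = fm_comp (f q) (fm_comp (f p) (lin_map P))"
        using comp_swap[OF f0[OF q] f0[OF p] fixes_origin_lin_map] comm p q by blast
      then show "fm_comp (g p) (g q) = fm_comp (g q) (g p)" using gfq[OF p q] gfq[OF q p] by simp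
    qed
    have dS: "\<forall>k\<in>S. mdiag (D k)" using dD by blast
    obtain ps ph where ps0: "fixes_origin ps" and ph0: "fixes_origin ph"
      and psph: "fm_comp ps ph = fm_id" and phps: "fm_comp ph ps = fm_id"
      and conj: "\<forall>k\<in>S. fm_comp ps (g k) = fm_comp (lin_map (D k)) ps"
      using simul_diag[of S g D] g0 dS gEL gcomm by (auto simp: S_def)
    define PS where "PS = fm_comp ps (lin_map Q)"
    define PH where "PH = fm_comp (lin_map P) ph"
    have "fm_comp PH PS = fm_id" unfolding PS_def PH_def
      using comp_cancel[OF ps0 fixes_origin_lin_map phps] ph0 ps0
      by (simp add: fm_comp_assoc lin_map_comp PQ lin_map_1)
    moreover have "fm_comp PS PH = fm_id" unfolding PS_def PH_def
      using lin_cancel[OF QP ph0] ps0 by (simp add: fm_comp_assoc psph)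
    moreover have "fm_linear (fm_comp PS (fm_comp (f k) PH))" if k: "k \<in> S" for k
    proof -
      have "fm_comp PS (fm_comp (f k) PH) = fm_comp (fm_comp ps (g k)) ph"
        unfolding PS_def PH_def g_def using f0[OF k] ps0 ph0 by (simp add: fm_comp_assoc)
      also have "\<dots> = lin_map (D k)" using conj k ps0 ph0 by (simp add: fm_comp_assoc psph)
      finally show ?thesis by simp
    qed
    moreover have "fixes_origin PS" "fixes_origin PH" unfolding PS_def PH_def using ps0 by simp_all
    ultimately show "simul_formally_linearizable f S"
      unfolding simul_formally_linearizable_def by (intro exI[of _ PH] exI[of _ PS]) auto
  qed
qed

end
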